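(* For all $x,y\in\mathcal{X}$, $N\in\mathbb{N}^+$ and $\eta>0$, $$\tilde\alpha_N(x,y)-\alpha(x,y)\le\eta+2\sup_{x'\in\mathcal{X}}\mathbb{P}_{Q_{x',N}}\left[|W_{x',N}-1|\ge\frac{\eta}{2(1+\eta)}\right].$$
   Context: Let $(\mathcal{X},\mathcal{B}(\mathcal{X}))$ be a measurable space, $\pi$ a probability distribution on it with density $\pi(x)$ with respect to a reference measure, and $q$ a Markov proposal kernel. For each $x\in\mathcal{X}$, $N\in\mathbb{N}^+$, $Q_{x,N}$ is a probability distribution on $[0,\infty)$ such that $W_{x,N}\sim Q_{x,N}$ satisfies $W_{x,N}>0$ a.s. and $\mathbb{E}[W_{x,N}]=1$. Define $\alpha(x,y)=\min\{1,\frac{\pi(dy)q(y,dx)}{\pi(dx)q(x,dy)}\}$ and $\tilde\alpha_N(x,y)=\mathbb{E}[\min\{1,\frac{\pi(dy)q(y,dx)}{\pi(dx)q(x,dy)}\frac{W_{y,N}}{W_{x,N}}\}]$ with $W_{x,N}\sim Q_{x,N}$ and $W_{y,N}\sim Q_{y,N}$ independent. *)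

theory Defs
  imports "HOL-Probability.Probability"
begin

text \<open>The Metropolis--Hastings ratio pi(dy) q(y,dx) / (pi(dx) q(x,dy)) is passed as an
  arbitrary nonnegative real-valued function r on pairs of states.\<close>

definition mh_alpha :: "('a \<Rightarrow> 'a \<Rightarrow> real) \<Rightarrow> 'a \<Rightarrow> 'a \<Rightarrow> real" where
  "mh_alpha r x y = min 1 (r x y)"

text \<open>Pseudo-marginal acceptance probability: W_x ~ Q x N and W_y ~ Q y N independent.\<close>
definition pm_alpha :: "('a \<Rightarrow> 'a \<Rightarrow> real) \<Rightarrow> ('a \<Rightarrow> nat \<Rightarrow> real measure) \<Rightarrow> nat \<Rightarrow> 'a \<Rightarrow> 'a \<Rightarrow> real" where
  "pm_alpha r Q N x y =
     integral\<^sup>L (Q x N \<Otimes>\<^sub>M Q y N) (\<lambda>(wx, wy). min 1 (r x y * (wy / wx)))"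

end

theory Submission
  imports Defs
begin

lemma pointwise:
  fixes r wx wy \<eta> :: real
  assumes r: "r \<ge> 0" and e: "\<eta> > 0"
  defines "\<delta> \<equiv> \<eta> / (2 * (1 + \<eta>))"
  shows "min 1 (r * (wy / wx)) - min 1 r
     \<le> \<eta> + indicator {w. \<delta> \<le> \<bar>w - 1\<bar>} wx + indicator {w. \<delta> \<le> \<bar>w - 1\<bar>} wy"
proof (cases "\<delta> \<le> \<bar>wx - 1\<bar> \<or> \<delta> \<le> \<bar>wy - 1\<bar>")
  case True
  have "min 1 (r * (wy / wx)) \<le> 1" by simp
  moreover have "min 1 r \<ge> 0" using r by simp
  moreover have "indicator {w. \<delta> \<le> \<bar>w - 1\<bar>} wx + indicator {w. \<delta> \<le> \<bar>w - 1\<bar>} wy \<ge> (1::real)"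
    using True by (auto simp: indicator_def)
  ultimately show ?thesis using e by linarith
next
  case False
  have d0: "\<delta> > 0" "\<delta> < 1/2" using e by (auto simp: \<delta>_def field_simps)
  have hx: "wx > 1 - \<delta>" "wy < 1 + \<delta>" using False by auto
  have wxp: "wx > 0" using hx d0 by linarith
  define t where "t = wy / wx"
  have tle: "t \<le> (1 + \<delta>) / (1 - \<delta>)"
  proof (cases "wy \<le> 0")
    case True
    hence "t \<le> 0" unfolding t_def using wxp by (simp add: divide_nonpos_pos)
    moreover have "(1 + \<delta>) / (1 - \<delta>) \<ge> 0" using d0 by simp
    ultimately show ?thesis by linarith
  next
    case False
    have "t \<le> (1 + \<delta>) / wx" unfolding t_def using hx wxp by (simp add: divide_right_mono)
    also have "\<dots> \<le> (1 + \<delta>) / (1 - \<delta>)"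
      using hx d0 by (intro divide_left_mono) auto
    finally show ?thesis .
  qed
  have key: "(1 + \<delta>) / (1 - \<delta>) - 1 \<le> \<eta>"
  proof -
    have "(1 + \<delta>) / (1 - \<delta>) = (2 + 3*\<eta>) / (2 + \<eta>)"
    proof -
      have p: "2 * (1 + \<eta>) \<noteq> 0" "2 + \<eta> \<noteq> 0" using e by auto
      have a: "1 + \<delta> = (2 + 3*\<eta>) / (2 * (1 + \<eta>))" using p unfolding \<delta>_def by (simp add: field_simps)
      have b: "1 - \<delta> = (2 + \<eta>) / (2 * (1 + \<eta>))" using p unfolding \<delta>_def by (simp add: field_simps)
      show ?thesis unfolding a b using p by simp
    qed
    also have "\<dots> \<le> 1 + \<eta>" using e
      by (subst divide_le_eq) (auto simp: algebra_simps)
    finally show ?thesis by linarith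
  qed
  have "min 1 (r * t) - min 1 r \<le> \<eta>"
  proof (cases "t \<ge> 1")
    case True
    have "min 1 (r * t) \<le> t * min 1 r"
    proof (cases "r \<ge> 1")
      case True
      have "min 1 (r * t) \<le> 1" by simp
      also have "1 \<le> t" using \<open>t \<ge> 1\<close> .
      also have "t = t * min 1 r" using True by (simp add: min_def)
      finally show ?thesis .
    next
      case False
      have "min 1 (r * t) \<le> r * t" by simp
      also have "\<dots> = t * min 1 r" using False by (simp add: min_def mult.commute)
      finally show ?thesis .
    qed
    hence "min 1 (r * t) - min 1 r \<le> (t - 1) * min 1 r" by (simp add: algebra_simps)
    also have "\<dots> \<le> t - 1" using True r by (simp add: mult_left_le)
    finally show ?thesis using tle key by linarith
  next
    case False
    hence "r * t \<le> r" using r by (simp add: mult_left_le)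
    then show ?thesis using e by (auto simp: min_def)
  qed
  moreover have "indicator {w. \<delta> \<le> \<bar>w - 1\<bar>} wx + indicator {w. \<delta> \<le> \<bar>w - 1\<bar>} wy \<ge> (0::real)"
    by (auto simp: indicator_def)
  ultimately show ?thesis unfolding t_def by linarith
qed

theorem lemma3p7:
  fixes r :: "'a \<Rightarrow> 'a \<Rightarrow> real"
    and Q :: "'a \<Rightarrow> nat \<Rightarrow> real measure"
    and x y :: 'a and N :: nat and \<eta> :: real
  assumes r_nonneg: "\<And>u v. r u v \<ge> 0"
    and Q_prob: "\<And>u n. n \<ge> 1 \<Longrightarrow> prob_space (Q u n)"
    and Q_sets: "\<And>u n. n \<ge> 1 \<Longrightarrow> sets (Q u n) = sets borel"
    and Q_pos: "\<And>u n. n \<ge> 1 \<Longrightarrow> (AE w in Q u n. w > 0)"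
    and Q_int: "\<And>u n. n \<ge> 1 \<Longrightarrow> integrable (Q u n) (\<lambda>w. w)"
    and Q_mean: "\<And>u n. n \<ge> 1 \<Longrightarrow> integral\<^sup>L (Q u n) (\<lambda>w. w) = 1"
    and N_pos: "N \<ge> 1"
    and eta_pos: "\<eta> > 0"
  shows "pm_alpha r Q N x y - mh_alpha r x y
           \<le> \<eta> + 2 * (SUP x'. measure (Q x' N) {w. \<bar>w - 1\<bar> \<ge> \<eta> / (2 * (1 + \<eta>))})"
proof -
  define \<delta> where "\<delta> = \<eta> / (2 * (1 + \<eta>))"
  define A where "A = {w::real. \<delta> \<le> \<bar>w - 1\<bar>}"
  define P where "P = Q x N \<Otimes>\<^sub>M Q y N"
  define c where "c = min 1 (r x y)"
  define f where "f = (\<lambda>(wx::real, wy::real). min 1 (r x y * (wy / wx)))"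
  interpret X: prob_space "Q x N" using Q_prob N_pos .
  interpret Y: prob_space "Q y N" using Q_prob N_pos .
  interpret XY: pair_prob_space "Q x N" "Q y N" by unfold_locales
  have sX: "sets (Q x N) = sets borel" and sY: "sets (Q y N) = sets borel" using Q_sets N_pos by auto
  have spX: "space (Q x N) = UNIV" and spY: "space (Q y N) = UNIV"
    using sets_eq_imp_space_eq[OF sX] sets_eq_imp_space_eq[OF sY] by auto
  have Pprob: "prob_space P" unfolding P_def by (rule XY.prob_space_axioms)
  interpret PP: prob_space P by (rule Pprob)
  have sP: "sets P = sets (borel \<Otimes>\<^sub>M borel)"
    unfolding P_def by (rule sets_pair_measure_cong[OF sX sY])
  have Ab: "A \<in> sets borel" unfolding A_def by measurable
  have AX: "A \<in> sets (Q x N)" "A \<in> sets (Q y N)" using Ab sX sY by auto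
  have S1: "A \<times> UNIV \<in> sets P" unfolding P_def using AX spY
    by (metis pair_measureI sets.top)
  have S2: "UNIV \<times> A \<in> sets P" unfolding P_def using AX spX
    by (metis pair_measureI sets.top)
  have fm: "f \<in> borel_measurable P"
    unfolding f_def using sP by (simp add: measurable_cong_sets[OF sP refl])
  have predm: "Measurable.pred (borel \<Otimes>\<^sub>M borel) (\<lambda>z::real\<times>real. 0 < fst z \<and> 0 < snd z)"
    by measurable
  have pb: "{z \<in> space (borel \<Otimes>\<^sub>M borel). 0 < fst z \<and> 0 < snd (z::real\<times>real)} \<in> sets (borel \<Otimes>\<^sub>M borel)"
    by measurable
  have predP: "{z \<in> space P. 0 < fst z \<and> 0 < snd z} \<in> sets P"
    using pb unfolding sP sets_eq_imp_space_eq[OF sP] .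
  have AEpos: "AE z in P. 0 < fst z \<and> 0 < snd z"
    unfolding P_def
  proof (rule XY.AE_pair_measure)
    show "{z \<in> space (Q x N \<Otimes>\<^sub>M Q y N). 0 < fst z \<and> 0 < snd z} \<in> sets (Q x N \<Otimes>\<^sub>M Q y N)"
      using predP unfolding P_def .
    show "AE a in Q x N. AE b in Q y N. 0 < fst (a, b) \<and> 0 < snd (a, b)"
      using Q_pos[OF N_pos, of x] Q_pos[OF N_pos, of y] by (auto elim!: eventually_mono)
  qed
  have fbd: "AE z in P. norm (f z) \<le> 1"
    using AEpos
  proof (rule eventually_mono)
    fix z :: "real \<times> real" assume "0 < fst z \<and> 0 < snd z"
    moreover obtain a b where "z = (a, b)" by fastforce
    ultimately show "norm (f z) \<le> 1" using r_nonneg[of x y]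
      by (simp add: f_def)
  qed
  have fb: "integrable P f"
    by (rule PP.integrable_const_bound[where B=1]) (use fbd fm in auto)
  have gi: "integrable P (\<lambda>z. \<eta> + indicator (A \<times> UNIV) z + indicator (UNIV \<times> A) z)"
    using S1 S2 by (intro Bochner_Integration.integrable_add integrable_real_indicator)
      (auto simp: PP.emeasure_finite less_top[symmetric])
  have "pm_alpha r Q N x y - mh_alpha r x y = integral\<^sup>L P f - c"
    unfolding pm_alpha_def mh_alpha_def P_def f_def c_def by simp
  also have "\<dots> = integral\<^sup>L P (\<lambda>z. f z - c)"
    using fb by (simp add: PP.prob_space)
  also have "\<dots> \<le> integral\<^sup>L P (\<lambda>z. \<eta> + indicator (A \<times> UNIV) z + indicator (UNIV \<times> A) z)"
  proof (rule integral_mono)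
    show "integrable P (\<lambda>z. f z - c)" using fb by auto
    show "integrable P (\<lambda>z. \<eta> + indicator (A \<times> UNIV) z + indicator (UNIV \<times> A) z)" by (rule gi)
    fix z assume "z \<in> space P"
    obtain a b where z: "z = (a, b)" by fastforce
    show "f z - c \<le> \<eta> + indicator (A \<times> UNIV) z + indicator (UNIV \<times> A) z"
      using pointwise[OF r_nonneg[of x y] eta_pos, where wx=a and wy=b]
      unfolding z f_def c_def A_def \<delta>_def by (simp add: indicator_def)
  qed
  also have "\<dots> = \<eta> + measure P (A \<times> UNIV) + measure P (UNIV \<times> A)"
  proof -
    have i1: "integrable P (indicat_real (A \<times> UNIV))" "integrable P (indicat_real (UNIV \<times> A))"
      using S1 S2 by (auto intro!: integrable_real_indicator simp: PP.emeasure_finite less_top[symmetric])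
    have "integral\<^sup>L P (\<lambda>z. \<eta> + indicator (A \<times> UNIV) z + indicator (UNIV \<times> A) z)
        = integral\<^sup>L P (\<lambda>z. \<eta> + indicator (A \<times> UNIV) z) + integral\<^sup>L P (indicat_real (UNIV \<times> A))"
      using i1 by (intro Bochner_Integration.integral_add) auto
    also have "integral\<^sup>L P (\<lambda>z. \<eta> + indicator (A \<times> UNIV) z) = integral\<^sup>L P (\<lambda>z. \<eta>) + integral\<^sup>L P (indicat_real (A \<times> UNIV))"
      using i1 by (intro Bochner_Integration.integral_add) auto
    finally show ?thesis using S1 S2 by (simp add: PP.prob_space)
  qed
  also have "measure P (A \<times> UNIV) = measure (Q x N) A"
  proof -
    have "emeasure P (A \<times> UNIV) = emeasure (Q x N) A"
      unfolding P_def using Y.emeasure_pair_measure_Times[OF AX(1) sets.top[of "Q y N"]] spY Y.emeasure_space_1 by simp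
    then show ?thesis by (simp add: measure_def)
  qed
  also have "measure P (UNIV \<times> A) = measure (Q y N) A"
  proof -
    have "emeasure P (UNIV \<times> A) = emeasure (Q y N) A"
      unfolding P_def using Y.emeasure_pair_measure_Times[OF sets.top[of "Q x N"] AX(2)] spX X.emeasure_space_1 by simp
    then show ?thesis by (simp add: measure_def)
  qed
  finally have main: "pm_alpha r Q N x y - mh_alpha r x y \<le> \<eta> + measure (Q x N) A + measure (Q y N) A" .
  have bdd: "bdd_above (range (\<lambda>x'. measure (Q x' N) A))"
    using prob_space.prob_le_1[OF Q_prob[OF N_pos]] by (auto intro!: bdd_aboveI)
  have "measure (Q x N) A \<le> (SUP x'. measure (Q x' N) A)" "measure (Q y N) A \<le> (SUP x'. measure (Q x' N) A)"
    using bdd by (auto intro: cSUP_upper)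
  with main show ?thesis unfolding A_def \<delta>_def by simp
qed

end
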